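(* Consider the Variance-shifting Procedure described in the context, and suppose that in iteration $k$ the procedure reaches Step 2 (i.e. $\mathrm{Reroute}(\mathcal{A}_{k-1},\tau)$ was feasible with optimal solution $(\bar p^k,\bar f^k,\bar\theta^k)$). Let $(\bar f,\mathcal{A})$ be an arbitrary compatible pair. Then there exists $0<\gamma\le 1$ such that for all $0\le t\le\gamma$, the pair $$\bigl((1-t)\bar f^k+t\bar f,\;(1-t)\mathcal{A}_{k-1}+t\mathcal{A}\bigr)$$ is compatible.
   Context: Network (DC model): bus set $\mathcal{B}$, $n=|\mathcal{B}|$; line set $\mathcal{E}$, $m=|\mathcal{E}|$; each line $ij$ has susceptance $b_{ij}>0$ and limit $f^{\max}_{ij}>0$. $B$ is the $n\times n$ bus susceptance matrix; $\hat B$ is $B$ with last row and column removed (assumed invertible); $\breve B=\begin{pmatrix}\hat B^{-1}&0\\0&0\end{pmatrix}$ with $i$-th row $\breve B_i$; $\pi_{ij}=\breve B_i^T-\breve B_j^T$. $\mathcal{G}\subseteq\mathcal{B}$ is the set of generator buses, with limits $p_i^{\min}\le p_i^{\max}$ and costs $c_i(p)=c_{i0}p^2+c_{i1}p+c_{i2}$, $c_{i0}\ge 0$. $d\in\mathbb{R}^n$ are loads, $\mu\in\mathbb{R}^n$ mean stochastic injections, $\omega$ a zero-mean random vector with covariance $\Omega$. $\mathcal{K}$ is a given convex set of $n\times n$ participation matrices $\mathcal{A}$ (with rows $\mathcal{A}_i$). Safety parameters $\nu_{ij}\ge0$ (lines) and $\nu_i\ge0$ (generators) are given. For a matrix $\mathcal{A}$,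 $\mathbf{V}(\mathcal{A})\in\mathbb{R}^m$ has entries $\mathbf{V}(\mathcal{A})_{ij}=b_{ij}^2\pi_{ij}^T(I-\mathcal{A})\Omega(I-\mathcal{A}^T)\pi_{ij}$ (line flow variances). Compatibility: a pair $(\bar f,\mathcal{A})$ with $\bar f\in\mathbb{R}^m$ is compatible if $\mathcal{A}\in\mathcal{K}$ and there exist $\bar p\in\mathbb{R}^n$ (with $\bar p_i=0$ for $i\notin\mathcal{G}$) and $\bar\theta\in\mathbb{R}^n$ with $B\bar\theta=\bar p+\mu-d$; $\bar f_{ij}=b_{ij}(\bar\theta_i-\bar\theta_j)$ and $|\bar f_{ij}|+\nu_{ij}\sqrt{\mathbf{V}(\mathcal{A})_{ij}}\le f^{\max}_{ij}$ for all $ij\in\mathcal{E}$; and $p_i^{\min}+\nu_i\sqrt{\mathcal{A}_i^T\Omega\mathcal{A}_i}\le\bar p_i\le p_i^{\max}-\nu_i\sqrt{\mathcal{A}_i^T\Omega\mathcal{A}_i}$ for all $i\in\mathcal{G}$ (i.e. they extend to a feasible solution of the safety-constrained DC-OPF, whose objective is $\sum_{i\in\mathcal{G}}[c_{i0}(\bar p_i^2+\mathcal{A}_i^T\Omega\mathcal{A}_i)+c_{i1}\bar p_i+c_{i2}]$). Variance metric: for each line $ij$ a convex nondecreasing function $\Delta_{ij}:[0,\infty)\to[0,\infty)$, and for each flow vector $\bar f$ a set $\mathcal{F}(\bar f)\subseteq\mathcal{E}$ depending only on $\bar f$; $\Delta(\bar f,s^2)=\sum_{ij\in\mathcal{F}(\bar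 f)}\Delta_{ij}(s^2_{ij})$. Subproblems. For $\hat{\mathcal{A}}\in\mathcal{K}$ and $0<\tau<1$, $\mathrm{Reroute}(\hat{\mathcal{A}},\tau)$ is: minimize $\sum_{i\in\mathcal{G}}[c_{i0}(\bar p_i^2+\hat{\mathcal{A}}_i^T\Omega\hat{\mathcal{A}}_i)+c_{i1}\bar p_i+c_{i2}]$ over $\bar p,\bar f,\bar\theta$ subject to $B\bar\theta=\bar p+\mu-d$, $\bar f_{ij}=b_{ij}(\bar\theta_i-\bar\theta_j)$, $|\bar f_{ij}|+\nu_{ij}\sqrt{\mathbf{V}(\hat{\mathcal{A}})_{ij}}\le(1-\tau)f^{\max}_{ij}$ for all $ij\in\mathcal{E}$, and the generator constraints above with $\hat{\mathcal{A}}$. For $\bar f'$, $\mathcal{A}'$, let $\mathbf{T}(\bar f',\mathcal{A}',\tau)=\{ij\in\mathcal{E}:|\bar f'_{ij}|+\nu_{ij}\sqrt{\mathbf{V}(\mathcal{A}')_{ij}}\ge(1-\tau)f^{\max}_{ij}\}$. $\mathrm{VShift}(\bar f',\mathcal{A}',\tau)$ is: minimize $\sum_{ij\in\mathcal{F}(\bar f')}\Delta_{ij}(s_{ij}^2)$ over $s\in\mathbb{R}^m_{\ge0}$, $\mathcal{A}$ subject to $\mathcal{A}\in\mathcal{K}$, $s_{ij}^2\ge\mathbf{V}(\mathcal{A})_{ij}$ for all $ij\in\mathcal{E}$, and $|\bar f'_{ij}|+\nu_{ij}s_{ij}\le f^{\max}_{ij}$ for $ij\in\mathbf{T}(\bar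 f',\mathcal{A}',\tau)$. Variance-shifting Procedure. Input: a feasible solution $(\bar p^0,\bar f^0,\mathcal{A}_0)$ of the safety-constrained problem (so $(\bar f^0,\mathcal{A}_0)$ is compatible), the metric $\Delta$, $0<\tau<1$, and an iteration bound $N\ge1$; set $s^2_0=\mathbf{V}(\mathcal{A}_0)$. For $k=1,\dots,N$: (1) solve $\mathrm{Reroute}(\mathcal{A}_{k-1},\tau)$; if infeasible, stop; else let $(\bar p^k,\bar f^k,\bar\theta^k)$ be an optimal solution. (2) Solve $\mathrm{VShift}(\bar f^k,\mathcal{A}_{k-1},\tau)$, with optimal solution $(\hat s_k,\hat{\mathcal{A}}_k)$. (3) Choose the largest $\lambda\in(0,1]$ such that $(\bar f^k,(1-\lambda)\mathcal{A}_{k-1}+\lambda\hat{\mathcal{A}}_k)$ is compatible. (4) Set $\mathcal{A}_k=(1-\lambda)\mathcal{A}_{k-1}+\lambda\hat{\mathcal{A}}_k$ and $s^2_k=\mathbf{V}(\mathcal{A}_k)$. (5) If $\Delta(\bar f^k,s^2_k)\ge\Delta(\bar f^{k-1},s^2_{k-1})$, stop; otherwise reset $\tau\leftarrow\tau/2$ and continue. *)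

theory Defs
  imports "HOL-Analysis.Analysis"
begin

text \<open>
  Buses are 0..<nb (the last bus is nb-1),
  lines are 0..<nl; line l connects bus fr l to bus to l.
  n x n matrices and vectors are functions on nat, only entries below nb matter.
\<close>

record net =
  nb :: nat
  nl :: nat
  fr :: "nat \<Rightarrow> nat"
  to :: "nat \<Rightarrow> nat"
  sus :: "nat \<Rightarrow> real"
  fmax :: "nat \<Rightarrow> real"
  gens :: "nat set"
  pmin :: "nat \<Rightarrow> real"
  pmax :: "nat \<Rightarrow> real"
  c0 :: "nat \<Rightarrow> real"
  c1 :: "nat \<Rightarrow> real"
  c2 :: "nat \<Rightarrow> real"
  load :: "nat \<Rightarrow> real"
  mu :: "nat \<Rightarrow> real"
  Omega :: "nat \<Rightarrow> nat \<Rightarrow> real"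
  Kset :: "(nat \<Rightarrow> nat \<Rightarrow> real) set"
  nu_line :: "nat \<Rightarrow> real"
  nu_gen :: "nat \<Rightarrow> real"

definition delta :: "nat \<Rightarrow> nat \<Rightarrow> real" where
  "delta i j = (if i = j then 1 else 0)"

definition Bmat :: "net \<Rightarrow> nat \<Rightarrow> nat \<Rightarrow> real" where
  "Bmat N i j = (\<Sum>l<nl N. sus N l * (delta (fr N l) i - delta (to N l) i)
                                    * (delta (fr N l) j - delta (to N l) j))"

text \<open>M is a two-sided inverse of hat B (B without last row/column), padded by zeros.\<close>
definition is_hatB_inv :: "net \<Rightarrow> (nat \<Rightarrow> nat \<Rightarrow> real) \<Rightarrow> bool" where
  "is_hatB_inv N M \<longleftrightarrow>
     (\<forall>i<nb N - 1. \<forall>j<nb N - 1. (\<Sum>k<nb N - 1. M i k * Bmat N k j) = delta i j) \<and>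
     (\<forall>i<nb N - 1. \<forall>j<nb N - 1. (\<Sum>k<nb N - 1. Bmat N i k * M k j) = delta i j) \<and>
     (\<forall>i j. \<not> (i < nb N - 1 \<and> j < nb N - 1) \<longrightarrow> M i j = 0)"

definition Bbreve :: "net \<Rightarrow> nat \<Rightarrow> nat \<Rightarrow> real" where
  "Bbreve N = (THE M. is_hatB_inv N M)"

definition piv :: "net \<Rightarrow> nat \<Rightarrow> nat \<Rightarrow> real" where
  "piv N l k = Bbreve N (fr N l) k - Bbreve N (to N l) k"

definition Vvar :: "net \<Rightarrow> (nat \<Rightarrow> nat \<Rightarrow> real) \<Rightarrow> nat \<Rightarrow> real" where
  "Vvar N A l =
     (let w = (\<lambda>k. \<Sum>j<nb N. piv N l j * (delta j k - A j k))
      in (sus N l)\<^sup>2 * (\<Sum>k<nb N. \<Sum>k'<nb N. w k * Omega N k k' * w k'))"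

definition rowvar :: "net \<Rightarrow> (nat \<Rightarrow> nat \<Rightarrow> real) \<Rightarrow> nat \<Rightarrow> real" where
  "rowvar N A i = (\<Sum>j<nb N. \<Sum>k<nb N. A i j * Omega N j k * A i k)"

definition mixA :: "real \<Rightarrow> (nat \<Rightarrow> nat \<Rightarrow> real) \<Rightarrow> (nat \<Rightarrow> nat \<Rightarrow> real) \<Rightarrow> nat \<Rightarrow> nat \<Rightarrow> real" where
  "mixA t A A' = (\<lambda>i j. (1 - t) * A i j + t * A' i j)"

definition mixv :: "real \<Rightarrow> (nat \<Rightarrow> real) \<Rightarrow> (nat \<Rightarrow> real) \<Rightarrow> nat \<Rightarrow> real" where
  "mixv t f f' = (\<lambda>l. (1 - t) * f l + t * f' l)"

definition net_ok :: "net \<Rightarrow> bool" where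
  "net_ok N \<longleftrightarrow>
     1 \<le> nb N \<and>
     (\<forall>l<nl N. fr N l < nb N \<and> to N l < nb N \<and> fr N l \<noteq> to N l
               \<and> sus N l > 0 \<and> fmax N l > 0 \<and> nu_line N l \<ge> 0) \<and>
     gens N \<subseteq> {..<nb N} \<and>
     (\<forall>i\<in>gens N. pmin N i \<le> pmax N i \<and> c0 N i \<ge> 0 \<and> nu_gen N i \<ge> 0) \<and>
     (\<forall>i<nb N. \<forall>j<nb N. Omega N i j = Omega N j i) \<and>
     (\<forall>x. (\<Sum>i<nb N. \<Sum>j<nb N. x i * Omega N i j * x j) \<ge> 0) \<and>
     (\<forall>A\<in>Kset N. \<forall>A'\<in>Kset N. \<forall>t\<in>{0..1}. mixA t A A' \<in> Kset N) \<and>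
     (\<exists>M. is_hatB_inv N M)"

text \<open>DC constraints with line limits scaled by c (c = 1: safety-constrained problem,
  c = 1 - tau: Reroute).\<close>
definition dc_cons :: "net \<Rightarrow> real \<Rightarrow> (nat \<Rightarrow> nat \<Rightarrow> real) \<Rightarrow> (nat \<Rightarrow> real)
                        \<Rightarrow> (nat \<Rightarrow> real) \<Rightarrow> (nat \<Rightarrow> real) \<Rightarrow> bool" where
  "dc_cons N c A p th f \<longleftrightarrow>
     (\<forall>i<nb N. i \<notin> gens N \<longrightarrow> p i = 0) \<and>
     (\<forall>i<nb N. (\<Sum>j<nb N. Bmat N i j * th j) = p i + mu N i - load N i) \<and>
     (\<forall>l<nl N. f l = sus N l * (th (fr N l) - th (to N l))) \<and>
     (\<forall>l<nl N. \<bar>f l\<bar> + nu_line N l * sqrt (Vvar N A l) \<le> c * fmax N l) \<and>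
     (\<forall>i\<in>gens N. pmin N i + nu_gen N i * sqrt (rowvar N A i) \<le> p i \<and>
                  p i \<le> pmax N i - nu_gen N i * sqrt (rowvar N A i))"

definition sc_feasible :: "net \<Rightarrow> (nat \<Rightarrow> real) \<Rightarrow> (nat \<Rightarrow> real) \<Rightarrow> (nat \<Rightarrow> nat \<Rightarrow> real) \<Rightarrow> bool" where
  "sc_feasible N p f A \<longleftrightarrow> A \<in> Kset N \<and> (\<exists>th. dc_cons N 1 A p th f)"

definition compatible :: "net \<Rightarrow> (nat \<Rightarrow> real) \<Rightarrow> (nat \<Rightarrow> nat \<Rightarrow> real) \<Rightarrow> bool" where
  "compatible N f A \<longleftrightarrow> A \<in> Kset N \<and> (\<exists>p th. dc_cons N 1 A p th f)"

definition cost :: "net \<Rightarrow> (nat \<Rightarrow> nat \<Rightarrow> real) \<Rightarrow> (nat \<Rightarrow> real) \<Rightarrow> real" where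
  "cost N A p = (\<Sum>i\<in>gens N. c0 N i * ((p i)\<^sup>2 + rowvar N A i) + c1 N i * p i + c2 N i)"

definition reroute_opt :: "net \<Rightarrow> (nat \<Rightarrow> nat \<Rightarrow> real) \<Rightarrow> real
                            \<Rightarrow> (nat \<Rightarrow> real) \<Rightarrow> (nat \<Rightarrow> real) \<Rightarrow> (nat \<Rightarrow> real) \<Rightarrow> bool" where
  "reroute_opt N A tau p f th \<longleftrightarrow>
     dc_cons N (1 - tau) A p th f \<and>
     (\<forall>p' f' th'. dc_cons N (1 - tau) A p' th' f' \<longrightarrow> cost N A p \<le> cost N A p')"

definition Delta :: "((nat \<Rightarrow> real) \<Rightarrow> nat set) \<Rightarrow> (nat \<Rightarrow> real \<Rightarrow> real)
                      \<Rightarrow> (nat \<Rightarrow> real) \<Rightarrow> (nat \<Rightarrow> real) \<Rightarrow> real" where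
  "Delta F Dl f s2 = (\<Sum>l\<in>F f. Dl l (s2 l))"

definition metric_ok :: "net \<Rightarrow> ((nat \<Rightarrow> real) \<Rightarrow> nat set) \<Rightarrow> (nat \<Rightarrow> real \<Rightarrow> real) \<Rightarrow> bool" where
  "metric_ok N F Dl \<longleftrightarrow>
     (\<forall>l<nl N. convex_on {0..} (Dl l) \<and> mono_on {0..} (Dl l) \<and> (\<forall>x\<ge>0. Dl l x \<ge> 0)) \<and>
     (\<forall>f. F f \<subseteq> {..<nl N})"

definition Tset :: "net \<Rightarrow> (nat \<Rightarrow> real) \<Rightarrow> (nat \<Rightarrow> nat \<Rightarrow> real) \<Rightarrow> real \<Rightarrow> nat set" where
  "Tset N f A tau = {l. l < nl N \<and> \<bar>f l\<bar> + nu_line N l * sqrt (Vvar N A l) \<ge> (1 - tau) * fmax N l}"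

definition vshift_feas :: "net \<Rightarrow> (nat \<Rightarrow> real) \<Rightarrow> (nat \<Rightarrow> nat \<Rightarrow> real) \<Rightarrow> real
                             \<Rightarrow> (nat \<Rightarrow> real) \<Rightarrow> (nat \<Rightarrow> nat \<Rightarrow> real) \<Rightarrow> bool" where
  "vshift_feas N f' A' tau s A \<longleftrightarrow>
     A \<in> Kset N \<and>
     (\<forall>l<nl N. s l \<ge> 0 \<and> (s l)\<^sup>2 \<ge> Vvar N A l) \<and>
     (\<forall>l\<in>Tset N f' A' tau. \<bar>f' l\<bar> + nu_line N l * s l \<le> fmax N l)"

definition vshift_opt :: "net \<Rightarrow> ((nat \<Rightarrow> real) \<Rightarrow> nat set) \<Rightarrow> (nat \<Rightarrow> real \<Rightarrow> real)
                           \<Rightarrow> (nat \<Rightarrow> real) \<Rightarrow> (nat \<Rightarrow> nat \<Rightarrow> real) \<Rightarrow> real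
                           \<Rightarrow> (nat \<Rightarrow> real) \<Rightarrow> (nat \<Rightarrow> nat \<Rightarrow> real) \<Rightarrow> bool" where
  "vshift_opt N F Dl f' A' tau s A \<longleftrightarrow>
     vshift_feas N f' A' tau s A \<and>
     (\<forall>s2 A2. vshift_feas N f' A' tau s2 A2 \<longrightarrow>
        (\<Sum>l\<in>F f'. Dl l ((s l)\<^sup>2)) \<le> (\<Sum>l\<in>F f'. Dl l ((s2 l)\<^sup>2)))"

text \<open>
  A run of the Variance-shifting Procedure that completes iterations 1..k-1
  (without stopping) and in iteration k finds Reroute(A_{k-1}, tau_k) feasible with
  optimal solution (p_k, f_k, th_k), i.e. reaches Step 2 of iteration k.
  Asq j = A_j, tausq j = value of tau used in iteration j, shat/Ahat/lam the
  VShift solutions and step sizes of completed iterations.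
\<close>
definition vs_reaches_step2 ::
  "net \<Rightarrow> ((nat \<Rightarrow> real) \<Rightarrow> nat set) \<Rightarrow> (nat \<Rightarrow> real \<Rightarrow> real)
   \<Rightarrow> (nat \<Rightarrow> real) \<Rightarrow> (nat \<Rightarrow> real) \<Rightarrow> (nat \<Rightarrow> nat \<Rightarrow> real) \<Rightarrow> real \<Rightarrow> nat \<Rightarrow> nat
   \<Rightarrow> (nat \<Rightarrow> nat \<Rightarrow> nat \<Rightarrow> real) \<Rightarrow> (nat \<Rightarrow> real)
   \<Rightarrow> (nat \<Rightarrow> nat \<Rightarrow> real) \<Rightarrow> (nat \<Rightarrow> nat \<Rightarrow> real) \<Rightarrow> (nat \<Rightarrow> nat \<Rightarrow> real)
   \<Rightarrow> (nat \<Rightarrow> nat \<Rightarrow> real) \<Rightarrow> (nat \<Rightarrow> nat \<Rightarrow> nat \<Rightarrow> real) \<Rightarrow> (nat \<Rightarrow> real) \<Rightarrow> bool" where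
  "vs_reaches_step2 N F Dl p0 f0 A0 tau0 Nit k Asq tausq psq fsq thsq shat Ahat lam \<longleftrightarrow>
     0 < tau0 \<and> tau0 < 1 \<and> 1 \<le> Nit \<and> 1 \<le> k \<and> k \<le> Nit \<and>
     sc_feasible N p0 f0 A0 \<and>
     Asq 0 = A0 \<and> psq 0 = p0 \<and> fsq 0 = f0 \<and> tausq 1 = tau0 \<and>
     (\<forall>j\<in>{1..k}. reroute_opt N (Asq (j - 1)) (tausq j) (psq j) (fsq j) (thsq j)) \<and>
     (\<forall>j\<in>{1..<k}.
        vshift_opt N F Dl (fsq j) (Asq (j - 1)) (tausq j) (shat j) (Ahat j) \<and>
        0 < lam j \<and> lam j \<le> 1 \<and>
        compatible N (fsq j) (mixA (lam j) (Asq (j - 1)) (Ahat j)) \<and>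
        (\<forall>lam'. 0 < lam' \<and> lam' \<le> 1 \<and> compatible N (fsq j) (mixA lam' (Asq (j - 1)) (Ahat j))
                 \<longrightarrow> lam' \<le> lam j) \<and>
        Asq j = mixA (lam j) (Asq (j - 1)) (Ahat j) \<and>
        Delta F Dl (fsq j) (Vvar N (Asq j)) < Delta F Dl (fsq (j - 1)) (Vvar N (Asq (j - 1))) \<and>
        tausq (j + 1) = tausq j / 2)"

end

theory Submission imports Defs begin

definition qf :: "nat set \<Rightarrow> (nat \<Rightarrow> nat \<Rightarrow> real) \<Rightarrow> (nat \<Rightarrow> real) \<Rightarrow> (nat \<Rightarrow> real) \<Rightarrow> real" where
  "qf S Om x y = (\<Sum>i\<in>S. \<Sum>j\<in>S. x i * Om i j * y j)"

lemma qf_lin: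
  "qf S Om (\<lambda>i. a * x i + b * y i) (\<lambda>i. a * x i + b * y i)
     = a\<^sup>2 * qf S Om x x + a * b * (qf S Om x y + qf S Om y x) + b\<^sup>2 * qf S Om y y"
  unfolding qf_def
  by (simp add: algebra_simps power2_eq_square sum.distrib sum_distrib_left)

lemma cs_aux:
  fixes qx qy c :: real
  assumes "\<And>s. qx + s * c + s\<^sup>2 * qy \<ge> 0" and "qx \<ge> 0" "qy \<ge> 0"
  shows "c \<le> 2 * sqrt qx * sqrt qy"
proof (cases "qy = 0")
  case True
  show ?thesis
  proof (rule ccontr)
    assume "\<not> ?thesis"
    hence c: "c > 0" using True by simp
    have "qx + (- (qx + 1) / c) * c + (- (qx + 1) / c)\<^sup>2 * qy \<ge> 0" by (rule assms(1))
    thus False using c True by simp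
  qed
next
  case False
  hence qy: "qy > 0" using assms by simp
  have "qx + (- c / (2*qy)) * c + (- c / (2*qy))\<^sup>2 * qy \<ge> 0" by (rule assms(1))
  hence "qx - c\<^sup>2 / (4*qy) \<ge> 0" using qy by (simp add: power2_eq_square field_simps)
  hence "c\<^sup>2 \<le> 4 * qx * qy" using qy by (simp add: field_simps)
  hence "sqrt (c\<^sup>2) \<le> sqrt (4 * qx * qy)" by (rule real_sqrt_le_mono)
  hence "\<bar>c\<bar> \<le> 2 * sqrt qx * sqrt qy" by (simp add: real_sqrt_mult)
  thus ?thesis by simp
qed

lemma qf_sqrt_convex:
  assumes psd: "\<And>z. qf S Om z z \<ge> 0" and t: "0 \<le> t" "t \<le> 1"
  shows "sqrt (qf S Om (\<lambda>i. (1 - t) * x i + t * y i) (\<lambda>i. (1 - t) * x i + t * y i))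
         \<le> (1 - t) * sqrt (qf S Om x x) + t * sqrt (qf S Om y y)"
proof -
  let ?qx = "qf S Om x x" and ?qy = "qf S Om y y" and ?c = "qf S Om x y + qf S Om y x"
  have h: "?qx + s * ?c + s\<^sup>2 * ?qy \<ge> 0" for s
    using psd[of "\<lambda>i. 1 * x i + s * y i"] unfolding qf_lin by simp
  have c: "?c \<le> 2 * sqrt ?qx * sqrt ?qy" by (rule cs_aux[OF h psd psd])
  have "qf S Om (\<lambda>i. (1 - t) * x i + t * y i) (\<lambda>i. (1 - t) * x i + t * y i)
        = (1-t)\<^sup>2 * ?qx + (1-t) * t * ?c + t\<^sup>2 * ?qy" by (rule qf_lin)
  also have "\<dots> \<le> (1-t)\<^sup>2 * ?qx + (1-t) * t * (2 * sqrt ?qx * sqrt ?qy) + t\<^sup>2 * ?qy"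
    using c t by (simp add: mult_left_mono)
  also have "\<dots> = ((1 - t) * sqrt ?qx + t * sqrt ?qy)\<^sup>2"
    using psd[of x] psd[of y] by (simp add: power2_eq_square algebra_simps)
  finally have "sqrt (qf S Om (\<lambda>i. (1 - t) * x i + t * y i) (\<lambda>i. (1 - t) * x i + t * y i))
      \<le> sqrt (((1 - t) * sqrt ?qx + t * sqrt ?qy)\<^sup>2)" by (rule real_sqrt_le_mono)
  also have "\<dots> = (1 - t) * sqrt ?qx + t * sqrt ?qy"
    using t psd[of x] psd[of y] by (intro real_sqrt_abs[THEN trans] abs_of_nonneg) simp
  finally show ?thesis .
qed


lemma psd_net: "net_ok N \<Longrightarrow> qf {..<nb N} (Omega N) z z \<ge> 0"
  unfolding net_ok_def qf_def by blast

lemma rowvar_conv: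
  assumes "net_ok N" "0 \<le> t" "t \<le> 1"
  shows "sqrt (rowvar N (mixA t A B) i) \<le> (1 - t) * sqrt (rowvar N A i) + t * sqrt (rowvar N B i)"
proof -
  have e: "rowvar N C i = qf {..<nb N} (Omega N) (C i) (C i)" for C
    unfolding rowvar_def qf_def by simp
  show ?thesis unfolding e mixA_def
    using qf_sqrt_convex[OF psd_net[OF assms(1)] assms(2,3), of "A i" "B i"] by simp
qed

definition wv :: "net \<Rightarrow> (nat \<Rightarrow> nat \<Rightarrow> real) \<Rightarrow> nat \<Rightarrow> nat \<Rightarrow> real" where
  "wv N A l = (\<lambda>k. \<Sum>j<nb N. piv N l j * (delta j k - A j k))"

lemma wv_mix: "wv N (mixA t A B) l = (\<lambda>k. (1 - t) * wv N A l k + t * wv N B l k)"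
  unfolding wv_def mixA_def
  by (rule ext) (simp add: sum_distrib_left sum.distrib[symmetric] algebra_simps)

lemma Vvar_conv:
  assumes "net_ok N" "0 \<le> t" "t \<le> 1"
  shows "sqrt (Vvar N (mixA t A B) l) \<le> (1 - t) * sqrt (Vvar N A l) + t * sqrt (Vvar N B l)"
proof -
  have e: "sqrt (Vvar N C l) = \<bar>sus N l\<bar> * sqrt (qf {..<nb N} (Omega N) (wv N C l) (wv N C l))" for C
    unfolding Vvar_def qf_def wv_def Let_def by (simp add: real_sqrt_mult)
  have "sqrt (qf {..<nb N} (Omega N) (wv N (mixA t A B) l) (wv N (mixA t A B) l))
     \<le> (1 - t) * sqrt (qf {..<nb N} (Omega N) (wv N A l) (wv N A l)) + t * sqrt (qf {..<nb N} (Omega N) (wv N B l) (wv N B l))"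
    unfolding wv_mix by (rule qf_sqrt_convex[OF psd_net[OF assms(1)] assms(2,3)])
  hence "\<bar>sus N l\<bar> * sqrt (qf {..<nb N} (Omega N) (wv N (mixA t A B) l) (wv N (mixA t A B) l))
     \<le> \<bar>sus N l\<bar> * ((1 - t) * sqrt (qf {..<nb N} (Omega N) (wv N A l) (wv N A l)) + t * sqrt (qf {..<nb N} (Omega N) (wv N B l) (wv N B l)))"
    by (rule mult_left_mono) simp
  thus ?thesis unfolding e by (simp add: algebra_simps)
qed

lemma flow_mix: "(1 - t) * (s * (a - b)) + t * (s * (a' - b')) = s * (((1-t)*a + t*a') - ((1-t)*b+t*b'))"
  for s :: real by (simp add: algebra_simps)

lemma abs_mix:
  fixes x y t :: real
  assumes "0 \<le> t" "t \<le> 1"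
  shows "\<bar>(1-t)*x + t*y\<bar> \<le> (1-t)*\<bar>x\<bar> + t*\<bar>y\<bar>"
proof -
  have "\<bar>(1-t)*x + t*y\<bar> \<le> \<bar>(1-t)*x\<bar> + \<bar>t*y\<bar>" by (rule abs_triangle_ineq)
  thus ?thesis using assms by (simp add: abs_mult)
qed

lemma dc_convex:
  assumes ok: "net_ok N" and t: "0 \<le> t" "t \<le> 1"
    and d1: "dc_cons N 1 A p th f" and d2: "dc_cons N 1 B p' th' f'"
  shows "dc_cons N 1 (mixA t A B) (mixv t p p') (mixv t th th') (mixv t f f')"
  unfolding dc_cons_def
proof (intro conjI allI impI ballI)
  fix i assume "i < nb N" "i \<notin> gens N"
  thus "mixv t p p' i = 0" using d1 d2 unfolding dc_cons_def mixv_def by simp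
next
  fix i assume i: "i < nb N"
  have "(\<Sum>j<nb N. Bmat N i j * mixv t th th' j)
     = (1 - t) * (\<Sum>j<nb N. Bmat N i j * th j) + t * (\<Sum>j<nb N. Bmat N i j * th' j)"
    unfolding mixv_def by (simp add: sum_distrib_left sum.distrib[symmetric] algebra_simps)
  also have "\<dots> = mixv t p p' i + mu N i - load N i"
  proof -
    have e1: "(\<Sum>j<nb N. Bmat N i j * th j) = p i + mu N i - load N i"
      using d1 i unfolding dc_cons_def by blast
    have e2: "(\<Sum>j<nb N. Bmat N i j * th' j) = p' i + mu N i - load N i"
      using d2 i unfolding dc_cons_def by blast
    show ?thesis unfolding e1 e2 mixv_def by (simp add: algebra_simps)
  qed
  finally show "(\<Sum>j<nb N. Bmat N i j * mixv t th th' j) = mixv t p p' i + mu N i - load N i" .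
next
  fix l assume l: "l < nl N"
  show "mixv t f f' l = sus N l * (mixv t th th' (fr N l) - mixv t th th' (to N l))"
  proof -
    have "\<forall>l<nl N. f l = sus N l * (th (fr N l) - th (to N l))"
      using d1 unfolding dc_cons_def by (elim conjE) assumption
    hence e1: "f l = sus N l * (th (fr N l) - th (to N l))" using l by simp
    have "\<forall>l<nl N. f' l = sus N l * (th' (fr N l) - th' (to N l))"
      using d2 unfolding dc_cons_def by (elim conjE) assumption
    hence e2: "f' l = sus N l * (th' (fr N l) - th' (to N l))" using l by simp
    show ?thesis unfolding mixv_def e1 e2 by (rule flow_mix)
  qed
next
  fix l assume l: "l < nl N"
  have nu: "nu_line N l \<ge> 0" using ok l unfolding net_ok_def by blast
  have a1: "\<bar>f l\<bar> + nu_line N l * sqrt (Vvar N A l) \<le> fmax N l"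
   and a2: "\<bar>f' l\<bar> + nu_line N l * sqrt (Vvar N B l) \<le> fmax N l"
    using d1 d2 l unfolding dc_cons_def by auto
  have "\<bar>mixv t f f' l\<bar> \<le> (1 - t) * \<bar>f l\<bar> + t * \<bar>f' l\<bar>"
    unfolding mixv_def using t by (rule abs_mix)
  moreover have "nu_line N l * sqrt (Vvar N (mixA t A B) l)
      \<le> nu_line N l * ((1 - t) * sqrt (Vvar N A l) + t * sqrt (Vvar N B l))"
    by (rule mult_left_mono[OF Vvar_conv[OF ok t] nu])
  moreover have "(1 - t) * (\<bar>f l\<bar> + nu_line N l * sqrt (Vvar N A l)) \<le> (1 - t) * fmax N l"
    using a1 t by (intro mult_left_mono) auto
  moreover have "t * (\<bar>f' l\<bar> + nu_line N l * sqrt (Vvar N B l)) \<le> t * fmax N l"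
    using a2 t by (intro mult_left_mono) auto
  ultimately show "\<bar>mixv t f f' l\<bar> + nu_line N l * sqrt (Vvar N (mixA t A B) l) \<le> 1 * fmax N l"
    by (simp add: algebra_simps)
next
  fix i assume i: "i \<in> gens N"
  have nu: "nu_gen N i \<ge> 0" using ok i unfolding net_ok_def by blast
  have r: "nu_gen N i * sqrt (rowvar N (mixA t A B) i)
      \<le> nu_gen N i * ((1 - t) * sqrt (rowvar N A i) + t * sqrt (rowvar N B i))"
    by (rule mult_left_mono[OF rowvar_conv[OF ok t] nu])
  have a1: "pmin N i + nu_gen N i * sqrt (rowvar N A i) \<le> p i"
      "p i \<le> pmax N i - nu_gen N i * sqrt (rowvar N A i)"
   and a2: "pmin N i + nu_gen N i * sqrt (rowvar N B i) \<le> p' i"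
      "p' i \<le> pmax N i - nu_gen N i * sqrt (rowvar N B i)"
    using d1 d2 i unfolding dc_cons_def by auto
  have m1: "(1 - t) * (pmin N i + nu_gen N i * sqrt (rowvar N A i)) \<le> (1 - t) * p i"
   and m2: "t * (pmin N i + nu_gen N i * sqrt (rowvar N B i)) \<le> t * p' i"
   and m3: "(1 - t) * p i \<le> (1 - t) * (pmax N i - nu_gen N i * sqrt (rowvar N A i))"
   and m4: "t * p' i \<le> t * (pmax N i - nu_gen N i * sqrt (rowvar N B i))"
    using a1 a2 t by (auto intro: mult_left_mono)
  show "pmin N i + nu_gen N i * sqrt (rowvar N (mixA t A B) i) \<le> mixv t p p' i"
    using r m1 m2 unfolding mixv_def by (simp add: algebra_simps)
  show "mixv t p p' i \<le> pmax N i - nu_gen N i * sqrt (rowvar N (mixA t A B) i)"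
    using r m3 m4 unfolding mixv_def by (simp add: algebra_simps)
qed

lemma compat_convex:
  assumes ok: "net_ok N" and t: "0 \<le> t" "t \<le> 1"
    and c1: "compatible N f A" and c2: "compatible N f' B"
  shows "compatible N (mixv t f f') (mixA t A B)"
proof -
  obtain p th p' th' where d1: "dc_cons N 1 A p th f" and d2: "dc_cons N 1 B p' th' f'"
    and K: "A \<in> Kset N" "B \<in> Kset N"
    using c1 c2 unfolding compatible_def by blast
  have "mixA t A B \<in> Kset N" using ok K t unfolding net_ok_def by auto
  thus ?thesis unfolding compatible_def using dc_convex[OF ok t d1 d2] by blast
qed

lemma dc_relax:
  assumes "dc_cons N c A p th f" "c \<le> 1" "net_ok N"
  shows "dc_cons N 1 A p th f"
proof -
  have "\<forall>l<nl N. c * fmax N l \<le> fmax N l"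
    using assms(2,3) unfolding net_ok_def by (auto intro: mult_right_le_one_le[of "fmax N l" c for l] mult_left_le_one_le)
  hence h2: "\<forall>l<nl N. \<bar>f l\<bar> + nu_line N l * sqrt (Vvar N A l) \<le> fmax N l"
    using assms(1) unfolding dc_cons_def by (meson order_trans)
  show ?thesis using assms(1) h2 unfolding dc_cons_def by simp
qed

theorem lemma5:
  assumes "net_ok N"
    and "metric_ok N F Dl"
    and "vs_reaches_step2 N F Dl p0 f0 A0 tau0 Nit k Asq tausq psq fsq thsq shat Ahat lam"
    and "compatible N fb Ab"
  shows "\<exists>\<gamma>. 0 < \<gamma> \<and> \<gamma> \<le> 1 \<and>
           (\<forall>t. 0 \<le> t \<and> t \<le> \<gamma> \<longrightarrow>
              compatible N (mixv t (fsq k) fb) (mixA t (Asq (k - 1)) Ab))"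
proof -
  note vs = assms(3)[unfolded vs_reaches_step2_def]
  have vsj: "\<forall>j\<in>{1..<k}.
        vshift_opt N F Dl (fsq j) (Asq (j - 1)) (tausq j) (shat j) (Ahat j) \<and>
        0 < lam j \<and> lam j \<le> 1 \<and>
        compatible N (fsq j) (mixA (lam j) (Asq (j - 1)) (Ahat j)) \<and>
        (\<forall>lam'. 0 < lam' \<and> lam' \<le> 1 \<and> compatible N (fsq j) (mixA lam' (Asq (j - 1)) (Ahat j))
                 \<longrightarrow> lam' \<le> lam j) \<and>
        Asq j = mixA (lam j) (Asq (j - 1)) (Ahat j) \<and>
        Delta F Dl (fsq j) (Vvar N (Asq j)) < Delta F Dl (fsq (j - 1)) (Vvar N (Asq (j - 1))) \<and>
        tausq (j + 1) = tausq j / 2"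
    using vs by (elim conjE) assumption
  have tpos: "1 \<le> j \<longrightarrow> j \<le> k \<longrightarrow> tausq j > 0" for j
  proof (induction j)
    case 0 thus ?case by simp
  next
    case (Suc j)
    show ?case
    proof (cases "j = 0")
      case True thus ?thesis using vs by simp
    next
      case False
      show ?thesis
      proof (intro impI)
        assume a: "Suc j \<le> k"
        hence j: "j \<in> {1..<k}" using False by auto
        have "tausq (j + 1) = tausq j / 2" using bspec[OF vsj j] by (elim conjE) assumption
        moreover have "tausq j > 0" using Suc.IH j by auto
        ultimately show "tausq (Suc j) > 0" by simp
      qed
    qed
  qed
  have k1: "1 \<le> k" using vs by simp
  have ro: "reroute_opt N (Asq (k - 1)) (tausq k) (psq k) (fsq k) (thsq k)" using vs k1 by auto
  have dc: "dc_cons N 1 (Asq (k - 1)) (psq k) (thsq k) (fsq k)"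
    using dc_relax[of N "1 - tausq k"] ro tpos[of k] k1 assms(1) unfolding reroute_opt_def by auto
  have K: "Asq (k - 1) \<in> Kset N"
  proof (cases "k = 1")
    case True thus ?thesis using vs unfolding sc_feasible_def by simp
  next
    case False
    hence j: "k - 1 \<in> {1..<k}" using k1 by auto
    have "compatible N (fsq (k-1)) (mixA (lam (k-1)) (Asq (k - 1 - 1)) (Ahat (k-1)))"
      using bspec[OF vsj j] by (elim conjE) assumption
    moreover have "Asq (k-1) = mixA (lam (k-1)) (Asq (k - 1 - 1)) (Ahat (k-1))"
      using bspec[OF vsj j] by (elim conjE) assumption
    ultimately show ?thesis unfolding compatible_def by simp
  qed
  have c: "compatible N (fsq k) (Asq (k - 1))" using dc K unfolding compatible_def by blast
  show ?thesis
    using compat_convex[OF assms(1) _ _ c assms(4)] by (intro exI[of _ 1]) auto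
qed

end
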